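(* Let $X$ be a Tychonoff space. Then $C(X)=T''(X)$ if and only if $X$ is an almost $P$-space.
   Context: $C(X)$ is the ring of real-valued continuous functions on $X$. A cozero set in $X$ is a set $coz(g)=\{x: g(x)\neq 0\}$ with $g\in C(X)$; its complement $Z(g)$ is a zero set. $T''(X)$ is the set of all functions $f\colon X\to\mathbb{R}$ for which there is a dense cozero set $U$ of $X$ with $f|_U$ continuous. $X$ is an almost $P$-space if every non-empty $G_\delta$-set of $X$ (equivalently, for Tychonoff $X$, every non-empty zero set) has non-empty interior. *)

theory Defs
  imports "HOL-Analysis.Analysis"
begin

definition tychonoff_space :: "'a topology \<Rightarrow> bool" where
  "tychonoff_space X \<longleftrightarrow> completely_regular_space X \<and> t1_space X"

definition Cfun :: "'a topology \<Rightarrow> ('a \<Rightarrow> real) set" where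
  "Cfun X = {f. continuous_map X euclideanreal f}"

definition cozero_set :: "'a topology \<Rightarrow> 'a set \<Rightarrow> bool" where
  "cozero_set X U \<longleftrightarrow>
     (\<exists>g. continuous_map X euclideanreal g \<and> U = {x \<in> topspace X. g x \<noteq> 0})"

definition dense_in :: "'a topology \<Rightarrow> 'a set \<Rightarrow> bool" where
  "dense_in X U \<longleftrightarrow> U \<subseteq> topspace X \<and> X closure_of U = topspace X"

definition T2fun :: "'a topology \<Rightarrow> ('a \<Rightarrow> real) set" where
  "T2fun X = {f. \<exists>U. cozero_set X U \<and> dense_in X U \<and>
                     continuous_map (subtopology X U) euclideanreal f}"

definition almost_P_space :: "'a topology \<Rightarrow> bool" where
  "almost_P_space X \<longleftrightarrow>
     (\<forall>S. gdelta_in X S \<and> S \<noteq> {} \<longrightarrow> X interior_of S \<noteq> {})"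

end

theory Submission
  imports Defs
begin

lemma zero_set_gdelta:
  assumes g: "continuous_map X euclideanreal g"
  shows "gdelta_in X {y \<in> topspace X. g y = 0}"
proof -
  define C where "C n = {y \<in> topspace X. \<bar>g y\<bar> \<in> {..<1 / real (Suc n)}}" for n
  have ga: "continuous_map X euclideanreal (\<lambda>y. \<bar>g y\<bar>)"
    using g by (intro continuous_intros)
  have "openin X (C n)" for n
    unfolding C_def by (rule openin_continuous_map_preimage[OF ga]) auto
  moreover have "C (Suc n) \<subseteq> C n" for n
  proof -
    have "1 / real (Suc (Suc n)) \<le> 1 / real (Suc n)"
      by (simp add: frac_le)
    then show ?thesis unfolding C_def by auto
  qed
  moreover have "\<Inter>(range C) = {y \<in> topspace X. g y = 0}"
  proof (rule set_eqI, rule iffI)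
    fix y assume y: "y \<in> \<Inter>(range C)"
    then have yt: "y \<in> topspace X" unfolding C_def by auto
    have "g y = 0"
    proof (rule ccontr)
      assume "g y \<noteq> 0"
      then have "\<bar>g y\<bar> > 0" by simp
      then obtain n where "inverse (real (Suc n)) < \<bar>g y\<bar>"
        using reals_Archimedean by blast
      then have n: "1 / real (Suc n) < \<bar>g y\<bar>" by (simp add: inverse_eq_divide)
      moreover have "y \<in> C n" using y by blast
      ultimately show False unfolding C_def by simp
    qed
    then show "y \<in> {y \<in> topspace X. g y = 0}" using yt by auto
  next
    fix y assume "y \<in> {y \<in> topspace X. g y = 0}"
    then show "y \<in> \<Inter>(range C)" unfolding C_def by auto
  qed
  ultimately show ?thesis
    unfolding gdelta_in_descending by blast
qed

lemma zero_set_inside: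
  fixes X :: "'a topology"
  assumes cr: "completely_regular_space X" and S: "gdelta_in X S" and x: "x \<in> S"
  shows "\<exists>g. continuous_map X euclideanreal g \<and> g x = 0 \<and> {y \<in> topspace X. g y = 0} \<subseteq> S"
proof -
  obtain C :: "nat \<Rightarrow> 'a set" where Co: "\<And>n. openin X (C n)" and CS: "\<Inter>(range C) = S"
    using S unfolding gdelta_in_descending by blast
  have xt: "x \<in> topspace X" using S x gdelta_in_subset by blast
  have "\<exists>h. continuous_map X (top_of_set {0..1::real}) h \<and> h x = 0 \<and> h ` (topspace X - C n) \<subseteq> {1}" for n :: nat
  proof -
    have c1: "closedin X (topspace X - C n)" using Co by blast
    have c2: "x \<in> topspace X - (topspace X - C n)" using xt x CS by blast
    have H: "\<forall>S x. closedin X S \<and> x \<in> topspace X - S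
          \<longrightarrow> (\<exists>f::'a\<Rightarrow>real. continuous_map X (top_of_set {0..1::real}) f \<and>
                  f x = 0 \<and> (f ` S \<subseteq> {1}))"
      using cr unfolding completely_regular_space_def by simp
    show ?thesis by (rule H[rule_format, OF conjI[OF c1 c2]])
  qed
  then have "\<forall>n. \<exists>h. continuous_map X (top_of_set {0..1::real}) h \<and> h x = 0 \<and> h ` (topspace X - C n) \<subseteq> {1}"
    by blast
  then have "\<exists>h. \<forall>n. continuous_map X (top_of_set {0..1::real}) (h n) \<and> h n x = 0 \<and> h n ` (topspace X - C n) \<subseteq> {1}"
    by (rule choice)
  then obtain h where h: "\<And>n. continuous_map X (top_of_set {0..1::real}) (h n) \<and> h n x = 0 \<and> h n ` (topspace X - C n) \<subseteq> {1}"
    by blast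
  have hc: "continuous_map X euclideanreal (h n)" for n
    using h[of n] by (simp add: continuous_map_in_subtopology)
  have hr: "h n y \<in> {0..1}" if "y \<in> topspace X" for n y
    using h[of n] that by (auto simp: continuous_map_in_subtopology Pi_iff)
  define a where "a y n = (1/2::real)^n * h n y" for y n
  define g where "g y = suminf (a y)" for y
  have geo: "summable (\<lambda>n. (1/2::real)^n)" by (rule summable_geometric) simp
  have ale: "\<bar>a y n\<bar> \<le> (1/2)^n" if "y \<in> topspace X" for y n
    using hr[OF that, of n] unfolding a_def by (simp add: abs_mult mult_le_cancel_left1)
  have a0: "0 \<le> a y n" if "y \<in> topspace X" for y n
    using hr[OF that, of n] unfolding a_def by simp
  have asum: "summable (a y)" if "y \<in> topspace X" for y
    by (rule summable_comparison_test[OF _ geo]) (use ale[OF that] in auto)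
  have gx: "g x = 0"
    unfolding g_def a_def using h by simp
  have Z: "{y \<in> topspace X. g y = 0} \<subseteq> S"
  proof
    fix y assume y: "y \<in> {y \<in> topspace X. g y = 0}"
    then have yt: "y \<in> topspace X" by simp
    have "\<forall>n. a y n = 0"
      using suminf_eq_zero_iff[OF asum[OF yt] a0[OF yt]] y unfolding g_def by simp
    then have "h n y = 0" for n unfolding a_def by simp
    have "y \<in> C n" for n
    proof (rule ccontr)
      assume "y \<notin> C n"
      then have "y \<in> topspace X - C n" using yt by simp
      then have "h n y \<in> {1}" using h[of n] by blast
      then show False using \<open>h n y = 0\<close> by simp
    qed
    then show "y \<in> S" using CS by blast
  qed
  have gc: "continuous_map X Met_TC.mtopology g"
  proof (rule Met_TC.continuous_map_uniform_limit[where F = sequentially and f = "\<lambda>N y. \<Sum>n<N. a y n"])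
    show "\<forall>\<^sub>F N in sequentially. continuous_map X Met_TC.mtopology (\<lambda>y. \<Sum>n<N. a y n)"
      unfolding a_def mtopology_is_euclidean
      by (intro always_eventually allI continuous_intros hc) auto
  next
    fix e :: real assume e: "0 < e"
    have "(\<lambda>N. 2 * (1/2::real)^N) \<longlonglongrightarrow> 2 * 0"
      by (intro tendsto_mult tendsto_const LIMSEQ_power_zero) auto
    then have lim: "(\<lambda>N. 2 * (1/2::real)^N) \<longlonglongrightarrow> 0" by simp
    have ev: "\<forall>\<^sub>F N in sequentially. 2 * (1/2::real)^N < e"
      by (rule order_tendstoD(2)[OF lim e])
    show "\<forall>\<^sub>F N in sequentially. \<forall>y\<in>topspace X. g y \<in> UNIV \<and> dist (\<Sum>n<N. a y n) (g y) < e"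
    proof (rule eventually_mono[OF ev], intro ballI conjI)
      fix N y assume N: "2 * (1/2::real)^N < e" and yt: "y \<in> topspace X"
      show "g y \<in> UNIV" by simp
      have "g y - (\<Sum>n<N. a y n) = (\<Sum>n. a y (n + N))"
        unfolding g_def using suminf_minus_initial_segment[OF asum[OF yt]] by simp
      moreover have "(\<Sum>n. a y (n + N)) \<le> (\<Sum>n. (1/2::real)^(n + N))"
      proof (rule suminf_le)
        show "a y (n + N) \<le> (1/2)^(n + N)" for n using ale[OF yt, of "n+N"] by simp
        show "summable (\<lambda>n. a y (n + N))" using asum[OF yt] by (simp add: summable_iff_shift)
        show "summable (\<lambda>n. (1/2::real)^(n + N))" using geo by (simp add: summable_iff_shift)
      qed
      moreover have "(\<Sum>n. (1/2::real)^(n + N)) = 2 * (1/2)^N"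
      proof -
        have "(\<Sum>n. (1/2::real)^(n + N)) = (\<Sum>n. (1/2)^N * (1/2::real)^n)"
          by (simp add: power_add mult.commute)
        also have "\<dots> = (1/2)^N * (\<Sum>n. (1/2::real)^n)"
          by (rule suminf_mult[OF geo])
        also have "\<dots> = (1/2)^N * 2"
          using suminf_geometric[of "1/2::real"] by simp
        finally show ?thesis by simp
      qed
      moreover have "0 \<le> (\<Sum>n. a y (n + N))"
        by (rule suminf_nonneg) (use asum[OF yt] a0[OF yt] in \<open>auto simp: summable_iff_shift\<close>)
      ultimately show "dist (\<Sum>n<N. a y n) (g y) < e"
        using N by (simp add: dist_real_def)
    qed
  qed simp
  show ?thesis
    using gc gx Z by (intro exI[of _ g]) simp
qed

theorem theorem2p2:
  fixes X :: "'a topology"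
  assumes "tychonoff_space X"
  shows "Cfun X = T2fun X \<longleftrightarrow> almost_P_space X"
proof
  assume eq: "Cfun X = T2fun X"
  have cr: "completely_regular_space X" using assms unfolding tychonoff_space_def by simp
  show "almost_P_space X"
    unfolding almost_P_space_def
  proof (intro allI impI)
    fix S assume S: "gdelta_in X S \<and> S \<noteq> {}"
    then obtain x where x: "x \<in> S" by blast
    obtain g where g: "continuous_map X euclideanreal g" and gx: "g x = 0"
      and ZS: "{y \<in> topspace X. g y = 0} \<subseteq> S"
      using zero_set_inside[OF cr _ x] S by blast
    define Z where "Z = {y \<in> topspace X. g y = 0}"
    define U where "U = {y \<in> topspace X. g y \<noteq> 0}"
    have xt: "x \<in> topspace X" using S x gdelta_in_subset by blast
    show "X interior_of S \<noteq> {}"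
    proof
      assume int0: "X interior_of S = {}"
      have "X interior_of Z \<subseteq> X interior_of S"
        using ZS unfolding Z_def by (rule interior_of_mono)
      then have iZ: "X interior_of Z = {}" using int0 by blast
      have UZ: "U = topspace X - Z" unfolding U_def Z_def by blast
      have cozU: "cozero_set X U" unfolding cozero_set_def U_def using g by blast
      have dU: "dense_in X U"
        unfolding dense_in_def UZ closure_of_complement iZ by simp
      define f where "f y = (if g y = 0 then 1 else 0::real)" for y
      have "continuous_map (subtopology X U) euclideanreal f"
      proof (rule continuous_map_eq[of _ _ "\<lambda>_. 0"])
        show "continuous_map (subtopology X U) euclideanreal (\<lambda>_. 0::real)" by simp
        show "\<And>y. y \<in> topspace (subtopology X U) \<Longrightarrow> 0 = f y"
          unfolding f_def U_def by auto
      qed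
      then have "f \<in> T2fun X" unfolding T2fun_def using cozU dU by blast
      then have "f \<in> Cfun X" using eq by simp
      then have fc: "continuous_map X euclideanreal f" unfolding Cfun_def by simp
      have "openin X {y \<in> topspace X. f y \<in> {1/2<..}}"
        by (rule openin_continuous_map_preimage[OF fc]) auto
      moreover have "{y \<in> topspace X. f y \<in> {1/2<..}} = Z"
        unfolding f_def Z_def by auto
      ultimately have "openin X Z" by simp
      then have "Z \<subseteq> X interior_of Z" by (simp add: interior_of_openin)
      moreover have "x \<in> Z" unfolding Z_def using xt gx by simp
      ultimately show False using iZ by blast
    qed
  qed
next
  assume aP: "almost_P_space X"
  show "Cfun X = T2fun X"
  proof
    show "Cfun X \<subseteq> T2fun X"
    proof
      fix f assume "f \<in> Cfun X"
      then have fc: "continuous_map X euclideanreal f" unfolding Cfun_def by simp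
      have "cozero_set X (topspace X)"
        unfolding cozero_set_def by (intro exI[of _ "\<lambda>_. 1"]) auto
      moreover have "dense_in X (topspace X)" unfolding dense_in_def by simp
      moreover have "continuous_map (subtopology X (topspace X)) euclideanreal f"
        using fc by simp
      ultimately show "f \<in> T2fun X" unfolding T2fun_def by blast
    qed
  next
    show "T2fun X \<subseteq> Cfun X"
    proof
      fix f assume "f \<in> T2fun X"
      then obtain U where cozU: "cozero_set X U" and dU: "dense_in X U"
        and fc: "continuous_map (subtopology X U) euclideanreal f"
        unfolding T2fun_def by blast
      obtain g where g: "continuous_map X euclideanreal g" and Ug: "U = {x \<in> topspace X. g x \<noteq> 0}"
        using cozU unfolding cozero_set_def by blast
      define Z where "Z = {y \<in> topspace X. g y = 0}"
      have UZ: "U = topspace X - Z" unfolding Ug Z_def by blast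
      have ZU: "Z = topspace X - U" unfolding Ug Z_def by blast
      have gd: "gdelta_in X Z" unfolding Z_def by (rule zero_set_gdelta[OF g])
      have "X interior_of Z = topspace X - X closure_of U"
        unfolding ZU by (rule interior_of_complement)
      also have "\<dots> = {}" using dU unfolding dense_in_def by simp
      finally have iZ: "X interior_of Z = {}" .
      have aP': "\<And>S. gdelta_in X S \<Longrightarrow> S \<noteq> {} \<Longrightarrow> X interior_of S \<noteq> {}"
        using aP unfolding almost_P_space_def by blast
      have "Z = {}"
      proof (rule ccontr)
        assume "Z \<noteq> {}"
        then show False using aP'[OF gd] iZ by simp
      qed
      then have "U = topspace X" unfolding UZ by simp
      then show "f \<in> Cfun X" using fc unfolding Cfun_def by simp
    qed
  qed
qed

end
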